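(* There is a universal constant $A>0$ such that the following holds. Let $N\ge6$ be even and consider the balanced Bernoulli–Laplace chain with $N_1=N_2=N_w=N_b=N/2$. For every $c>0$ and every integer $$m\ \ge\ \tfrac14 N\log N+\Big(\tfrac c2-\tfrac{\log 2}{8}\Big)N,$$ we have $$E_\pi\big[\|\rho_m(j;\cdot)-\pi\|_V\big]:=\sum_{j=0}^{N/2}\pi_j\,\|\rho_m(j;\cdot)-\pi\|_V\ \le\ A\,e^{-2c}.$$
   Context: Balanced Bernoulli–Laplace model: $N$ even, two urns each containing $N/2$ balls, $N/2$ white and $N/2$ black balls in total; the state $i\in\{0,\dots,N/2\}$ is the number of white balls in urn 1. At each step one ball is drawn uniformly from each urn and the two are swapped, giving transition probabilities $p_i=\frac{4(N/2-i)^2}{N^2}$ (from $i$ to $i+1$), $q_i=\frac{4i^2}{N^2}$ (from $i$ to $i-1$), $r_i=1-p_i-q_i$ (stay). $T$ is the transition matrix with $T_{ij}$ the probability to move from $j$ to $i$, and $\rho_m(j;i)=(T^m)_{ij}$ is the distribution at time $m$ started from $j$. The stationary distribution is $\pi_i=\binom{N/2}{i}^2/\binom{N}{N/2}$. $\|\rho-\pi\|_V=\frac12\sum_i|\rho_i-\pi_i|$ is total variation distance; $\log$ is the natural logarithm. *)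

theory Defs
  imports "HOL-Analysis.Analysis"
begin

definition BL_p :: "nat \<Rightarrow> nat \<Rightarrow> real" where
  "BL_p N i = 4 * (real (N div 2) - real i)^2 / (real N)^2"

definition BL_q :: "nat \<Rightarrow> nat \<Rightarrow> real" where
  "BL_q N i = 4 * (real i)^2 / (real N)^2"

text \<open>BL_T N i j: probability to move from j to i (states in 0..N div 2).\<close>
definition BL_T :: "nat \<Rightarrow> nat \<Rightarrow> nat \<Rightarrow> real" where
  "BL_T N i j =
     (if i \<le> N div 2 \<and> j \<le> N div 2 then
        (if i = j + 1 then BL_p N j
         else if j = i + 1 then BL_q N j
         else if i = j then 1 - BL_p N j - BL_q N j
         else 0)
      else 0)"

text \<open>BL_rho N m j i = (T^m)_{ij}, the distribution at time m started from j.\<close>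
fun BL_rho :: "nat \<Rightarrow> nat \<Rightarrow> nat \<Rightarrow> nat \<Rightarrow> real" where
  "BL_rho N 0 j i = (if i = j then 1 else 0)"
| "BL_rho N (Suc m) j i = (\<Sum>k\<in>{0..N div 2}. BL_T N i k * BL_rho N m j k)"

definition BL_pi :: "nat \<Rightarrow> nat \<Rightarrow> real" where
  "BL_pi N i = real ((N div 2) choose i)^2 / real (N choose (N div 2))"

definition BL_tv :: "nat \<Rightarrow> (nat \<Rightarrow> real) \<Rightarrow> real" where
  "BL_tv N \<rho> = (1/2) * (\<Sum>i\<in>{0..N div 2}. \<bar>\<rho> i - BL_pi N i\<bar>)"

end

theory Submission
  imports Defs
begin


lemma quad_disc:
  fixes a b c :: real
  assumes "\<And>t. 0 \<le> a + 2*b*t + c*t^2" "c \<ge> 0"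
  shows "b^2 \<le> a*c"
proof (cases "c = 0")
  case True
  have "b = 0"
  proof (rule ccontr)
    assume "b \<noteq> 0"
    have "0 \<le> a + 2*b*(-(a+1)/(2*b)) + c*(-(a+1)/(2*b))^2" by (rule assms(1))
    with True \<open>b\<noteq>0\<close> show False by (simp add: field_simps)
  qed
  then show ?thesis using True by simp
next
  case False
  with assms have c: "c > 0" by simp
  have "0 \<le> a + 2*b*(-b/c) + c*(-b/c)^2" by (rule assms(1))
  then have "0 \<le> a - b^2/c" using c by (simp add: field_simps power2_eq_square)
  then show ?thesis using c by (simp add: field_simps)
qed

lemma form_cs:
  fixes B :: "'a \<Rightarrow> 'a \<Rightarrow> real"
  assumes fin: "finite I" and sym: "\<And>i j. i\<in>I \<Longrightarrow> j\<in>I \<Longrightarrow> B i j = B j i"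
    and psd: "\<And>x. 0 \<le> (\<Sum>i\<in>I. \<Sum>j\<in>I. B i j * x i * x j)"
  shows "(\<Sum>i\<in>I. \<Sum>j\<in>I. B i j * u i * v j)^2
          \<le> (\<Sum>i\<in>I. \<Sum>j\<in>I. B i j * u i * u j) * (\<Sum>i\<in>I. \<Sum>j\<in>I. B i j * v i * v j)"
proof -
  define a where "a = (\<Sum>i\<in>I. \<Sum>j\<in>I. B i j * u i * u j)"
  define b where "b = (\<Sum>i\<in>I. \<Sum>j\<in>I. B i j * u i * v j)"
  define c where "c = (\<Sum>i\<in>I. \<Sum>j\<in>I. B i j * v i * v j)"
  have b2: "(\<Sum>i\<in>I. \<Sum>j\<in>I. B i j * v i * u j) = b"
  proof -
    have "(\<Sum>i\<in>I. \<Sum>j\<in>I. B i j * v i * u j) = (\<Sum>j\<in>I. \<Sum>i\<in>I. B i j * v i * u j)"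
      by (rule sum.swap)
    also have "\<dots> = b" unfolding b_def
      by (intro sum.cong refl) (simp add: sym mult.commute mult.left_commute)
    finally show ?thesis .
  qed
  have "\<And>t. 0 \<le> a + 2*b*t + c*t^2"
  proof -
    fix t
    have "0 \<le> (\<Sum>i\<in>I. \<Sum>j\<in>I. B i j * (u i + t * v i) * (u j + t * v j))" by (rule psd)
    also have "\<dots> = (\<Sum>i\<in>I. \<Sum>j\<in>I. B i j * u i * u j + t * (B i j * u i * v j) + t * (B i j * v i * u j) + t^2 * (B i j * v i * v j))"
      by (intro sum.cong refl) (simp add: algebra_simps power2_eq_square)
    also have "\<dots> = a + t * (\<Sum>i\<in>I. \<Sum>j\<in>I. B i j * u i * v j) + t * (\<Sum>i\<in>I. \<Sum>j\<in>I. B i j * v i * u j) + t^2 * c"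
      unfolding a_def c_def
      by (simp only: sum.distrib sum_distrib_left[symmetric])
    also have "\<dots> = a + t * b + t * b + t^2 * c" using b2 b_def by simp
    finally show "0 \<le> a + 2*b*t + c*t^2" by (simp add: algebra_simps)
  qed
  moreover have "c \<ge> 0" unfolding c_def by (rule psd)
  ultimately have "b^2 \<le> a*c" by (rule quad_disc)
  then show ?thesis by (simp add: a_def b_def c_def)
qed

lemma contraction:
  fixes w :: "'a \<Rightarrow> real" and Mx :: "'a \<Rightarrow> 'a \<Rightarrow> real"
  assumes fin: "finite I" and wpos: "\<And>i. i\<in>I \<Longrightarrow> w i > 0"
    and sym: "\<And>i j. i\<in>I \<Longrightarrow> j\<in>I \<Longrightarrow> w i * Mx i j = w j * Mx j i"
    and b0: "\<beta> \<ge> 0"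
    and up: "\<And>x. (\<Sum>i\<in>I. \<Sum>j\<in>I. w i * Mx i j * x i * x j) \<le> \<beta> * (\<Sum>i\<in>I. w i * (x i)^2)"
    and low: "\<And>x. - \<beta> * (\<Sum>i\<in>I. w i * (x i)^2) \<le> (\<Sum>i\<in>I. \<Sum>j\<in>I. w i * Mx i j * x i * x j)"
  shows "(\<Sum>i\<in>I. w i * (\<Sum>j\<in>I. Mx i j * x j)^2) \<le> \<beta>^2 * (\<Sum>i\<in>I. w i * (x i)^2)"
proof -
  define mv where "mv y i = (\<Sum>j\<in>I. Mx i j * y j)" for y i
  define P where "P y i = \<beta> * y i - mv y i" for y i
  define B where "B i j = (if i = j then w i * \<beta> else 0) - w i * Mx i j" for i j
  have Bsym: "B i j = B j i" if "i\<in>I" "j\<in>I" for i j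
    using sym[OF that] by (auto simp: B_def)
  have keyrow: "(\<Sum>j\<in>I. B i j * u i * v j) = w i * u i * P v i" if "i \<in> I" for u v i
  proof -
    have "(\<Sum>j\<in>I. B i j * u i * v j) = (\<Sum>j\<in>I. (if i = j then w i * \<beta> * u i * v j else 0)) - (\<Sum>j\<in>I. w i * u i * (Mx i j * v j))"
      unfolding sum_subtractf[symmetric] by (intro sum.cong refl) (auto simp: B_def algebra_simps)
    also have "\<dots> = w i * \<beta> * u i * v i - w i * u i * mv v i"
      using that fin by (simp add: mv_def sum_distrib_left)
    finally show ?thesis by (simp add: P_def algebra_simps)
  qed
  have key: "(\<Sum>i\<in>I. \<Sum>j\<in>I. B i j * u i * v j) = (\<Sum>i\<in>I. w i * u i * P v i)" for u v
    by (intro sum.cong refl keyrow)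
  have formM: "(\<Sum>i\<in>I. \<Sum>j\<in>I. w i * Mx i j * x i * x j) = (\<Sum>i\<in>I. w i * x i * mv x i)" for x
    by (intro sum.cong refl) (simp add: mv_def sum_distrib_left algebra_simps)
  have Bxx: "(\<Sum>i\<in>I. \<Sum>j\<in>I. B i j * y i * y j) = \<beta> * (\<Sum>i\<in>I. w i * (y i)^2) - (\<Sum>i\<in>I. \<Sum>j\<in>I. w i * Mx i j * y i * y j)" for y
    unfolding key formM P_def
    by (simp add: algebra_simps power2_eq_square sum_subtractf sum_distrib_left)
  have psd: "0 \<le> (\<Sum>i\<in>I. \<Sum>j\<in>I. B i j * y i * y j)" for y
    using up[of y] unfolding Bxx by simp
  define N where "N = (\<Sum>i\<in>I. w i * (P x i)^2)"
  define Q where "Q = (\<Sum>i\<in>I. \<Sum>j\<in>I. B i j * x i * x j)"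
  have Q0: "Q \<ge> 0" unfolding Q_def by (rule psd)
  have N0: "N \<ge> 0" unfolding N_def using wpos by (intro sum_nonneg) (simp add: less_imp_le)
  have cs: "(\<Sum>i\<in>I. \<Sum>j\<in>I. B i j * P x i * x j)^2 \<le> (\<Sum>i\<in>I. \<Sum>j\<in>I. B i j * P x i * P x j) * Q"
    unfolding Q_def by (rule form_cs[OF fin Bsym psd])
  have e1: "(\<Sum>i\<in>I. \<Sum>j\<in>I. B i j * P x i * x j) = N"
    unfolding key N_def by (simp add: power2_eq_square mult.assoc)
  have e2: "(\<Sum>i\<in>I. \<Sum>j\<in>I. B i j * P x i * P x j) \<le> 2 * \<beta> * N"
    using low[of "P x"] unfolding Bxx N_def by simp
  have NQ: "N \<le> 2 * \<beta> * Q"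
  proof (cases "N = 0")
    case True then show ?thesis using Q0 b0 by simp
  next
    case False
    with N0 have Np: "N > 0" by simp
    have "N^2 \<le> 2 * \<beta> * N * Q" using cs e1 mult_right_mono[OF e2 Q0]
      by simp
    then have "N * N \<le> N * (2 * \<beta> * Q)" by (simp add: power2_eq_square algebra_simps)
    then show ?thesis using Np by simp
  qed
  have Qx: "Q = (\<Sum>i\<in>I. w i * x i * P x i)" unfolding Q_def key ..
  have "(\<Sum>i\<in>I. w i * (\<Sum>j\<in>I. Mx i j * x j)^2) = (\<Sum>i\<in>I. w i * (\<beta> * x i - P x i)^2)"
    by (simp add: P_def mv_def)
  also have "\<dots> = \<beta>^2 * (\<Sum>i\<in>I. w i * (x i)^2) - 2 * \<beta> * Q + N"
    unfolding Qx N_def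
    by (simp add: power2_eq_square algebra_simps sum.distrib sum_subtractf sum_distrib_left)
  also have "\<dots> \<le> \<beta>^2 * (\<Sum>i\<in>I. w i * (x i)^2)" using NQ by simp
  finally show ?thesis .
qed

lemma amgm_t:
  fixes a b t :: real assumes "t > 0"
  shows "2*a*b \<le> a^2*t + b^2/t"
proof -
  have "0 \<le> (a*t - b)^2 / t" using assms by simp
  also have "\<dots> = a^2*t - 2*a*b + b^2/t" using assms by (simp add: field_simps power2_eq_square)
  finally show ?thesis by simp
qed

lemma schur:
  fixes S :: "'a \<Rightarrow> 'a \<Rightarrow> real"
  assumes fin: "finite I" and sym: "\<And>i j. i\<in>I \<Longrightarrow> j\<in>I \<Longrightarrow> S i j = S j i"
    and psi: "\<And>i. i\<in>I \<Longrightarrow> \<psi> i > 0"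
  shows "(\<Sum>i\<in>I. \<Sum>j\<in>I. S i j * x i * x j) \<le> (\<Sum>i\<in>I. (x i)^2 * (\<Sum>j\<in>I. \<bar>S i j\<bar> * \<psi> j) / \<psi> i)"
proof -
  define F where "F i j = \<bar>S i j\<bar> * (x i)^2 * \<psi> j / \<psi> i" for i j
  have step: "S i j * x i * x j \<le> (F i j + F j i) / 2" if "i\<in>I" "j\<in>I" for i j
  proof -
    have t: "\<psi> j / \<psi> i > 0" using psi that by simp
    have "S i j * x i * x j \<le> \<bar>S i j\<bar> * (\<bar>x i\<bar> * \<bar>x j\<bar>)"
      by (metis abs_ge_self abs_mult mult.assoc)
    also have "\<dots> \<le> \<bar>S i j\<bar> * (((\<bar>x i\<bar>)^2 * (\<psi> j / \<psi> i) + (\<bar>x j\<bar>)^2 / (\<psi> j / \<psi> i)) / 2)"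
      using amgm_t[OF t, of "\<bar>x i\<bar>" "\<bar>x j\<bar>"] by (intro mult_left_mono) auto
    also have "\<dots> = (F i j + F j i) / 2"
      using psi that sym[OF that] by (simp add: F_def field_simps)
    finally show ?thesis .
  qed
  have "(\<Sum>i\<in>I. \<Sum>j\<in>I. S i j * x i * x j) \<le> (\<Sum>i\<in>I. \<Sum>j\<in>I. (F i j + F j i) / 2)"
    by (intro sum_mono step)
  also have "\<dots> = ((\<Sum>i\<in>I. \<Sum>j\<in>I. F i j) + (\<Sum>i\<in>I. \<Sum>j\<in>I. F j i)) / 2"
    by (simp only: sum.distrib sum_divide_distrib[symmetric] add_divide_distrib)
  also have "(\<Sum>i\<in>I. \<Sum>j\<in>I. F j i) = (\<Sum>i\<in>I. \<Sum>j\<in>I. F i j)"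
    by (rule sum.swap)
  also have "(\<Sum>i\<in>I. \<Sum>j\<in>I. F i j) = (\<Sum>i\<in>I. (x i)^2 * (\<Sum>j\<in>I. \<bar>S i j\<bar> * \<psi> j) / \<psi> i)"
    by (simp add: F_def sum_distrib_left sum_divide_distrib mult_ac)
  finally show ?thesis by simp
qed




lemma binom_step: "i < n \<Longrightarrow> Suc i * (n choose Suc i) = (n - i) * (n choose i)"
  by (metis Suc_times_binomial binomial_absorb_comp Suc_pred' less_nat_zero_code neq0_conv)

lemma jensen_abs:
  fixes w h :: "'a \<Rightarrow> real"
  assumes "\<And>i. w i \<ge> 0" "(\<Sum>i\<in>A. w i) = 1"
  shows "(\<Sum>i\<in>A. w i * \<bar>h i\<bar>) \<le> sqrt (\<Sum>i\<in>A. w i * (h i)^2)"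
proof -
  have "(\<Sum>i\<in>A. sqrt (w i) * (sqrt (w i) * \<bar>h i\<bar>))^2 \<le> (\<Sum>i\<in>A. (sqrt (w i))^2) * (\<Sum>i\<in>A. (sqrt (w i) * \<bar>h i\<bar>)^2)"
    by (rule Cauchy_Schwarz_ineq_sum)
  also have "(\<Sum>i\<in>A. sqrt (w i) * (sqrt (w i) * \<bar>h i\<bar>)) = (\<Sum>i\<in>A. w i * \<bar>h i\<bar>)"
    using assms(1) by (intro sum.cong refl) (simp add: mult.assoc[symmetric])
  also have "(\<Sum>i\<in>A. (sqrt (w i))^2) = 1" using assms by simp
  also have "(\<Sum>i\<in>A. (sqrt (w i) * \<bar>h i\<bar>)^2) = (\<Sum>i\<in>A. w i * (h i)^2)"
    using assms(1) by (intro sum.cong refl) (simp add: power_mult_distrib)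
  finally show ?thesis by (simp add: real_le_rsqrt)
qed

locale BLc =
  fixes n :: nat
  assumes n3: "3 \<le> n"
begin

definition p :: "nat \<Rightarrow> real" where "p i = (real n - real i)^2 / (real n)^2"
definition q :: "nat \<Rightarrow> real" where "q i = (real i)^2 / (real n)^2"
definition r :: "nat \<Rightarrow> real" where "r i = 1 - p i - q i"
definition pi :: "nat \<Rightarrow> real" where "pi i = real (n choose i)^2 / real ((2*n) choose n)"
definition W :: "nat \<Rightarrow> real" where "W i = pi i * p i"
definition K :: "(nat \<Rightarrow> real) \<Rightarrow> nat \<Rightarrow> real" where
  "K f i = q i * f (i - 1) + r i * f i + p i * f (Suc i)"
definition E :: "(nat \<Rightarrow> real) \<Rightarrow> real" where
  "E f = (\<Sum>i<n. W i * (f (Suc i) - f i)^2)"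
definition bt :: real where "bt = 1 - 2 / real n"
definition a :: "nat \<Rightarrow> real" where "a i = 1 - q (Suc i) - p i"
definition Mo :: "nat \<Rightarrow> nat \<Rightarrow> real" where
  "Mo i j = (if j = Suc i then p (Suc i) else if Suc j = i then q i else 0)"
definition Mx :: "nat \<Rightarrow> nat \<Rightarrow> real" where
  "Mx i j = Mo i j + (if j = i then a i else 0)"

lemma npos: "real n > 0" using n3 by simp
lemma n3r: "real n \<ge> 3" using n3 by simp

lemma p_nonneg: "p i \<ge> 0" by (simp add: p_def)
lemma q_nonneg: "q i \<ge> 0" by (simp add: q_def)
lemma q0: "q 0 = 0" by (simp add: q_def)
lemma pn: "p n = 0" by (simp add: p_def)
lemma p_pos: "i < n \<Longrightarrow> p i > 0" using npos by (simp add: p_def)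
lemma pq_le1: assumes "i \<le> n" shows "p i + q i \<le> 1"
proof -
  have "(real n - real i)^2 + (real i)^2 \<le> (real n)^2"
    using assms by (simp add: power2_eq_square algebra_simps mult_left_mono)
  then show ?thesis using npos by (simp add: p_def q_def add_divide_distrib[symmetric] divide_le_eq_1)
qed
lemma r_nonneg: "i \<le> n \<Longrightarrow> r i \<ge> 0" using pq_le1[of i] by (simp add: r_def)

lemma pi_pos: "i \<le> n \<Longrightarrow> pi i > 0"
  by (simp add: pi_def)
lemma pi_nonneg: "pi i \<ge> 0" by (simp add: pi_def)
lemma pi_sum: "(\<Sum>i\<le>n. pi i) = 1"
proof -
  have "(\<Sum>i\<le>n. pi i) = (\<Sum>i\<le>n. real ((n choose i)^2)) / real ((2*n) choose n)"
    by (simp add: pi_def sum_divide_distrib)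
  also have "(\<Sum>i\<le>n. real ((n choose i)^2)) = real ((2*n) choose n)"
    by (simp only: of_nat_sum[symmetric] choose_square_sum)
  finally show ?thesis by simp
qed

lemma db: assumes "i < n" shows "pi i * p i = pi (Suc i) * q (Suc i)"
proof -
  have "real (Suc i * (n choose Suc i)) = real ((n - i) * (n choose i))"
    using binom_step[OF assms] by simp
  then have e: "(real i + 1) * real (n choose Suc i) = (real n - real i) * real (n choose i)"
    using assms by (simp add: of_nat_diff algebra_simps)
  have "pi i * p i = ((real n - real i) * real (n choose i))^2 / (real ((2*n) choose n) * (real n)^2)"
    by (simp add: pi_def p_def power_mult_distrib)
  also have "\<dots> = ((real i + 1) * real (n choose Suc i))^2 / (real ((2*n) choose n) * (real n)^2)"
    by (simp only: e)
  also have "\<dots> = pi (Suc i) * q (Suc i)"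
    by (simp add: pi_def q_def power_mult_distrib add.commute)
  finally show ?thesis .
qed

lemma W_pos: "i < n \<Longrightarrow> W i > 0" by (simp add: W_def pi_pos p_pos)

lemma bt_props: "0 \<le> bt" "bt < 1"
  using n3r by (simp_all add: bt_def field_simps)


lemma Mo_sum:
  assumes "i < n"
  shows "(\<Sum>j<n. Mo i j * g j) = p (Suc i) * g (Suc i) + q i * g (i - 1)"
proof -
  have pw: "Mo i j * g j = (if j = Suc i then p (Suc i) * g (Suc i) else 0)
        + (if 0 < i then (if j = i - 1 then q i * g (i - 1) else 0) else 0)" for j
    by (auto simp: Mo_def)
  have "(\<Sum>j<n. Mo i j * g j) = (if Suc i < n then p (Suc i) * g (Suc i) else 0)
          + (if 0 < i then q i * g (i - 1) else 0)"
    unfolding pw sum.distrib using assms by (simp add: sum.delta)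
  also have "\<dots> = p (Suc i) * g (Suc i) + q i * g (i - 1)"
  proof -
    have "(if Suc i < n then p (Suc i) * g (Suc i) else 0) = p (Suc i) * g (Suc i)"
    proof (cases "Suc i < n")
      case False then have "Suc i = n" using assms by simp
      then show ?thesis using pn by simp
    qed simp
    moreover have "(if 0 < i then q i * g (i - 1) else 0) = q i * g (i - 1)"
      using q0 by (cases "i = 0") auto
    ultimately show ?thesis by simp
  qed
  finally show ?thesis .
qed

lemma Mo_nonneg: "Mo i j \<ge> 0" by (simp add: Mo_def p_nonneg q_nonneg)

lemma WMo_sym: assumes "i < n" "j < n" shows "W i * Mo i j = W j * Mo j i"
proof -
  consider "j = Suc i" | "i = Suc j" | "j \<noteq> Suc i" "i \<noteq> Suc j" by blast
  then show ?thesis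
  proof cases
    case 1 then show ?thesis using db[of i] assms by (simp add: W_def Mo_def)
  next
    case 2 then show ?thesis using db[of j] assms by (simp add: W_def Mo_def)
  next
    case 3 then show ?thesis by (auto simp: Mo_def)
  qed
qed

lemma row_id: "a i + p (Suc i) + q i = bt"
  using npos by (simp add: a_def p_def q_def bt_def field_simps power2_eq_square)

definition s :: real where "s = (real n - 1)^2 / ((real n)^2 - 2 * real n - 1)"
definition psi :: "nat \<Rightarrow> real" where "psi i = (if i = 0 \<or> i = n - 1 then s else 1)"

lemma D_pos: "(real n)^2 - 2 * real n - 1 > 0"
proof -
  have "(real n)^2 - 2 * real n - 1 = (real n - 3) * (real n + 1) + 2" by (simp add: algebra_simps power2_eq_square)
  also have "\<dots> > 0" using n3r by (intro add_nonneg_pos mult_nonneg_nonneg) auto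
  finally show ?thesis .
qed

lemma s_ge1: "s \<ge> 1"
proof -
  have "(real n)^2 - 2 * real n - 1 \<le> (real n - 1)^2" by (simp add: algebra_simps power2_eq_square)
  then show ?thesis using D_pos by (simp add: s_def)
qed

lemma psi_pos: "psi i > 0" using s_ge1 by (simp add: psi_def)
lemma psi_le: "psi i \<le> s" using s_ge1 by (simp add: psi_def)

lemma row_low:
  assumes "i < n"
  shows "p (Suc i) * psi (Suc i) + q i * psi (i - 1) \<le> (a i + bt) * psi i"
proof -
  have D: "(real n)^2 - 2 * real n - 1 \<noteq> 0" using D_pos by simp
  have nz: "real n \<noteq> 0" using npos by simp
  consider "i = 0" | "i = n - 1" "i \<noteq> 0" | "0 < i" "i < n - 1" using assms by linarith
  then show ?thesis
  proof cases
    case 1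
    have ps1: "psi (Suc 0) = 1" using n3 by (simp add: psi_def)
    have ab: "a 0 + bt = ((real n)^2 - 2 * real n - 1) / (real n)^2"
      using nz by (simp add: a_def q_def p_def bt_def field_simps power2_eq_square)
    have "p 1 = (a 0 + bt) * s" unfolding ab s_def using D nz by (simp add: p_def)
    then show ?thesis using 1 ps1 q0 by (simp add: psi_def)
  next
    case 2
    have ps: "psi (i - 1) = 1" using n3 2 by (simp add: psi_def)
    have sn: "Suc i = n" using 2 n3 by simp
    have ri: "real i = real n - 1" using 2 n3 by (simp add: of_nat_diff)
    have ab: "a i + bt = ((real n)^2 - 2 * real n - 1) / (real n)^2"
      using nz unfolding a_def q_def p_def bt_def sn ri by (simp add: field_simps power2_eq_square)
    have "q i = (a i + bt) * s" unfolding ab s_def using D nz ri by (simp add: q_def)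
    then show ?thesis using 2 ps sn pn by (simp add: psi_def)
  next
    case 3
    have psi_i: "psi i = 1" using 3 by (simp add: psi_def)
    have X: "p (Suc i) + q i \<le> ((real n - 2)^2 + 1) / (real n)^2"
    proof -
      have ri1: "real i \<ge> 1" "real i \<le> real n - 2" using 3 by linarith+
      have "(real n - real (Suc i))^2 + (real i)^2 \<le> (real n - 2)^2 + 1"
      proof -
        have "(real n - 2)^2 + 1 - ((real n - real (Suc i))^2 + (real i)^2) = 2 * (real i - 1) * (real n - 2 - real i)"
          by (simp add: algebra_simps power2_eq_square)
        also have "\<dots> \<ge> 0" using ri1 by simp
        finally show ?thesis by simp
      qed
      then show ?thesis using nz by (simp add: p_def q_def add_divide_distrib[symmetric] divide_right_mono)
    qed
    have one_s: "(1 + s) * (((real n - 2)^2 + 1) / (real n)^2) \<le> 2 * bt"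
    proof -
      have e: "1 + s = 2 * real n * (real n - 2) / ((real n)^2 - 2 * real n - 1)"
      proof -
        have h: "((real n)^2 - 2 * real n - 1) + (real n - 1)^2 = 2 * real n * (real n - 2)"
          by (simp add: algebra_simps power2_eq_square)
        have "1 + s = (((real n)^2 - 2 * real n - 1) + (real n - 1)^2) / ((real n)^2 - 2 * real n - 1)"
          using D by (simp add: s_def add_divide_distrib)
        then show ?thesis unfolding h .
      qed
      have "((real n - 2)^2 + 1) \<le> (real n)^2 - 2 * real n - 1" using n3r by (simp add: power2_eq_square algebra_simps)
      then have "2 * real n * (real n - 2) * ((real n - 2)^2 + 1) \<le> 2 * real n * (real n - 2) * ((real n)^2 - 2 * real n - 1)"
        using n3r by (intro mult_left_mono) auto
      then have "2 * real n * (real n - 2) * ((real n - 2)^2 + 1) / ((real n)^2 - 2 * real n - 1) / (real n)^2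
          \<le> 2 * real n * (real n - 2) * ((real n)^2 - 2 * real n - 1) / ((real n)^2 - 2 * real n - 1) / (real n)^2"
        using D_pos by (intro divide_right_mono) auto
      moreover have "(1 + s) * (((real n - 2)^2 + 1) / (real n)^2) = 2 * real n * (real n - 2) * ((real n - 2)^2 + 1) / ((real n)^2 - 2 * real n - 1) / (real n)^2"
        unfolding e by simp
      moreover have "2 * real n * (real n - 2) * ((real n)^2 - 2 * real n - 1) / ((real n)^2 - 2 * real n - 1) / (real n)^2 = 2 * bt"
      proof -
        have "2 * real n * (real n - 2) * ((real n)^2 - 2 * real n - 1) / ((real n)^2 - 2 * real n - 1) = 2 * real n * (real n - 2)"
          using D by simp
        moreover have "2 * real n * (real n - 2) / (real n)^2 = 2 * bt"
          using nz unfolding bt_def by (simp add: field_simps power2_eq_square)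
        ultimately show ?thesis by simp
      qed
      ultimately show ?thesis by simp
    qed
    have "p (Suc i) * psi (Suc i) + q i * psi (i - 1) \<le> p (Suc i) * s + q i * s"
      using psi_le p_nonneg q_nonneg by (intro add_mono mult_left_mono) auto
    also have "\<dots> = s * (p (Suc i) + q i)" by (simp add: algebra_simps)
    also have "\<dots> \<le> 2 * bt - (p (Suc i) + q i)"
    proof -
      have "(1 + s) * (p (Suc i) + q i) \<le> (1 + s) * (((real n - 2)^2 + 1) / (real n)^2)"
        using X s_ge1 by (intro mult_left_mono) auto
      with one_s show ?thesis by (simp add: algebra_simps)
    qed
    also have "\<dots> = (a i + bt) * psi i" using row_id[of i] psi_i by simp
    finally show ?thesis .
  qed
qed


lemma Mx_sum:
  assumes "i < n"
  shows "(\<Sum>j<n. Mx i j * g j) = p (Suc i) * g (Suc i) + q i * g (i - 1) + a i * g i"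
proof -
  have "(\<Sum>j<n. Mx i j * g j) = (\<Sum>j<n. Mo i j * g j) + (\<Sum>j<n. (if j = i then a i * g i else 0))"
    unfolding sum.distrib[symmetric] by (intro sum.cong refl) (simp add: Mx_def algebra_simps)
  also have "\<dots> = p (Suc i) * g (Suc i) + q i * g (i - 1) + a i * g i"
    using assms by (simp add: Mo_sum)
  finally show ?thesis .
qed

lemma grad_K:
  assumes "i < n"
  shows "K f (Suc i) - K f i = (\<Sum>j<n. Mx i j * (f (Suc j) - f j))"
proof -
  have qi: "q i * (f (Suc (i - 1)) - f (i - 1)) = q i * (f i - f (i - 1))"
    using q0 by (cases i) auto
  show ?thesis unfolding Mx_sum[OF assms] qi
    by (simp add: K_def r_def a_def algebra_simps)
qed

lemma form_split:
  "(\<Sum>i<n. \<Sum>j<n. W i * Mx i j * x i * x j)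
     = (\<Sum>i<n. W i * a i * (x i)^2) + (\<Sum>i<n. \<Sum>j<n. (W i * Mo i j) * x i * x j)"
proof -
  have "(\<Sum>j<n. W i * Mx i j * x i * x j) = W i * a i * (x i)^2 + (\<Sum>j<n. (W i * Mo i j) * x i * x j)"
    if "i < n" for i
  proof -
    have "(\<Sum>j<n. W i * Mx i j * x i * x j) = (\<Sum>j<n. (if j = i then W i * a i * (x i)^2 else 0)) + (\<Sum>j<n. (W i * Mo i j) * x i * x j)"
      unfolding sum.distrib[symmetric] by (intro sum.cong refl) (simp add: Mx_def algebra_simps power2_eq_square)
    then show ?thesis using that by simp
  qed
  then show ?thesis by (simp add: sum.distrib)
qed

lemma form_up:
  "(\<Sum>i<n. \<Sum>j<n. W i * Mx i j * x i * x j) \<le> bt * (\<Sum>i<n. W i * (x i)^2)"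
proof -
  have "(\<Sum>i<n. \<Sum>j<n. (W i * Mo i j) * x i * x j) \<le> (\<Sum>i<n. (x i)^2 * (\<Sum>j<n. \<bar>W i * Mo i j\<bar> * 1) / 1)"
    by (rule schur) (auto simp: WMo_sym)
  also have "\<dots> = (\<Sum>i<n. (x i)^2 * (W i * (p (Suc i) + q i)))"
  proof (intro sum.cong refl)
    fix i assume "i \<in> {..<n}"
    then have i: "i < n" by simp
    have "(\<Sum>j<n. \<bar>W i * Mo i j\<bar> * 1) = W i * (\<Sum>j<n. Mo i j * 1)"
      using W_pos[OF i] Mo_nonneg by (simp add: sum_distrib_left abs_mult)
    also have "\<dots> = W i * (p (Suc i) + q i)" using Mo_sum[OF i, of "\<lambda>_. 1"] by simp
    finally show "(x i)^2 * (\<Sum>j<n. \<bar>W i * Mo i j\<bar> * 1) / 1 = (x i)^2 * (W i * (p (Suc i) + q i))" by simp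
  qed
  finally have h: "(\<Sum>i<n. \<Sum>j<n. (W i * Mo i j) * x i * x j) \<le> (\<Sum>i<n. (x i)^2 * (W i * (p (Suc i) + q i)))" .
  have "(\<Sum>i<n. W i * a i * (x i)^2) + (\<Sum>i<n. (x i)^2 * (W i * (p (Suc i) + q i))) = bt * (\<Sum>i<n. W i * (x i)^2)"
    unfolding sum.distrib[symmetric] sum_distrib_left
  proof (intro sum.cong refl)
    fix i
    show "W i * a i * (x i)^2 + (x i)^2 * (W i * (p (Suc i) + q i)) = bt * (W i * (x i)^2)"
    proof -
      have "W i * a i * (x i)^2 + (x i)^2 * (W i * (p (Suc i) + q i)) = W i * (x i)^2 * (a i + p (Suc i) + q i)"
        by (simp add: algebra_simps)
      then show ?thesis using row_id[of i] by simp
    qed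
  qed
  with h show ?thesis unfolding form_split by linarith
qed

lemma form_low:
  "- bt * (\<Sum>i<n. W i * (x i)^2) \<le> (\<Sum>i<n. \<Sum>j<n. W i * Mx i j * x i * x j)"
proof -
  have "(\<Sum>i<n. \<Sum>j<n. (- (W i * Mo i j)) * x i * x j) \<le> (\<Sum>i<n. (x i)^2 * (\<Sum>j<n. \<bar>- (W i * Mo i j)\<bar> * psi j) / psi i)"
    by (rule schur) (auto simp: WMo_sym psi_pos)
  also have "\<dots> \<le> (\<Sum>i<n. (x i)^2 * (W i * (a i + bt)))"
  proof (intro sum_mono)
    fix i assume "i \<in> {..<n}"
    then have i: "i < n" by simp
    have "(\<Sum>j<n. \<bar>- (W i * Mo i j)\<bar> * psi j) = W i * (\<Sum>j<n. Mo i j * psi j)"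
      using W_pos[OF i] Mo_nonneg by (simp add: sum_distrib_left abs_mult mult.assoc)
    also have "\<dots> = W i * (p (Suc i) * psi (Suc i) + q i * psi (i - 1))" using Mo_sum[OF i] by simp
    also have "\<dots> \<le> W i * ((a i + bt) * psi i)"
      using W_pos[OF i] row_low[OF i] by (intro mult_left_mono) auto
    finally have "(\<Sum>j<n. \<bar>- (W i * Mo i j)\<bar> * psi j) / psi i \<le> W i * (a i + bt)"
      using psi_pos[of i] by (simp add: divide_le_eq)
    then show "(x i)^2 * (\<Sum>j<n. \<bar>- (W i * Mo i j)\<bar> * psi j) / psi i \<le> (x i)^2 * (W i * (a i + bt))"
      by (metis mult_left_mono times_divide_eq_right zero_le_power2)
  qed
  finally have h: "- (\<Sum>i<n. \<Sum>j<n. (W i * Mo i j) * x i * x j) \<le> (\<Sum>i<n. (x i)^2 * (W i * (a i + bt)))"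
    by (simp add: sum_negf)
  have "(\<Sum>i<n. W i * a i * (x i)^2) - (\<Sum>i<n. (x i)^2 * (W i * (a i + bt))) = - bt * (\<Sum>i<n. W i * (x i)^2)"
    unfolding sum_subtractf[symmetric] sum_distrib_left
    by (intro sum.cong refl) (simp add: algebra_simps)
  with h show ?thesis unfolding form_split by linarith
qed

lemma WMx_sym: "i < n \<Longrightarrow> j < n \<Longrightarrow> W i * Mx i j = W j * Mx j i"
  using WMo_sym[of i j] by (auto simp: Mx_def algebra_simps)

lemma E_contr: "E (K f) \<le> bt^2 * E f"
proof -
  have "E (K f) = (\<Sum>i<n. W i * (\<Sum>j<n. Mx i j * (f (Suc j) - f j))^2)"
    unfolding E_def by (intro sum.cong refl) (simp add: grad_K)
  also have "\<dots> \<le> bt^2 * (\<Sum>i<n. W i * (f (Suc i) - f i)^2)"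
    by (rule contraction[where I="{..<n}" and w=W and Mx=Mx])
       (auto simp: W_pos WMx_sym bt_props form_up intro: form_low[simplified])
  finally show ?thesis unfolding E_def .
qed


lemma sbp: "(\<Sum>i\<le>n. pi i * f i * (f i - K f i)) = E f"
proof -
  have pw: "pi i * f i * (f i - K f i) = pi i * p i * f i * (f i - f (Suc i)) + pi i * q i * f i * (f i - f (i - 1))" for i
    by (simp add: K_def r_def algebra_simps)
  have s1: "(\<Sum>i\<le>n. pi i * p i * f i * (f i - f (Suc i))) = (\<Sum>i<n. W i * f i * (f i - f (Suc i)))"
    unfolding lessThan_Suc_atMost[symmetric] sum.lessThan_Suc using pn by (simp add: W_def)
  have s2: "(\<Sum>i\<le>n. pi i * q i * f i * (f i - f (i - 1))) = (\<Sum>i<n. W i * f (Suc i) * (f (Suc i) - f i))"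
  proof -
    have "(\<Sum>i\<le>n. pi i * q i * f i * (f i - f (i - 1))) = pi 0 * q 0 * f 0 * (f 0 - f (0 - 1)) + (\<Sum>i<n. pi (Suc i) * q (Suc i) * f (Suc i) * (f (Suc i) - f (Suc i - 1)))"
      unfolding lessThan_Suc_atMost[symmetric] by (rule sum.lessThan_Suc_shift)
    also have "\<dots> = (\<Sum>i<n. W i * f (Suc i) * (f (Suc i) - f i))"
      unfolding q0 W_def by (simp add: db)
    finally show ?thesis .
  qed
  have "(\<Sum>i\<le>n. pi i * f i * (f i - K f i)) = (\<Sum>i<n. W i * f i * (f i - f (Suc i))) + (\<Sum>i<n. W i * f (Suc i) * (f (Suc i) - f i))"
    unfolding pw sum.distrib s1 s2 ..
  also have "\<dots> = E f" unfolding E_def sum.distrib[symmetric]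
    by (intro sum.cong refl) (simp add: algebra_simps power2_eq_square)
  finally show ?thesis .
qed

lemma E_shift: "E (\<lambda>i. f i - c) = E f" by (simp add: E_def)
lemma E_cong: "(\<And>i. i \<le> n \<Longrightarrow> f i = g i) \<Longrightarrow> E f = E g"
  unfolding E_def by (intro sum.cong refl) auto
lemma K_shift: "K (\<lambda>i. f i - c) i = K f i - c" by (simp add: K_def r_def algebra_simps)
lemma E_nonneg: "E f \<ge> 0" unfolding E_def using W_pos by (intro sum_nonneg) (simp add: less_imp_le)

lemma var_step:
  "(\<Sum>i\<le>n. pi i * (g i)^2) - (\<Sum>i\<le>n. pi i * (K g i)^2) \<le> 2 * E g"
proof -
  have "(\<Sum>i\<le>n. pi i * (g i)^2) - (\<Sum>i\<le>n. pi i * (K g i)^2)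
      = 2 * (\<Sum>i\<le>n. pi i * g i * (g i - K g i)) - (\<Sum>i\<le>n. pi i * (g i - K g i)^2)"
    unfolding sum_subtractf[symmetric] sum_distrib_left
    by (intro sum.cong refl) (simp add: algebra_simps power2_eq_square)
  also have "\<dots> \<le> 2 * (\<Sum>i\<le>n. pi i * g i * (g i - K g i))"
    using pi_nonneg by (simp add: sum_nonneg)
  finally show ?thesis unfolding sbp .
qed


lemma E_le_norm: "E f \<le> 4 * (\<Sum>i\<le>n. pi i * (f i)^2)"
proof -
  have "E f \<le> (\<Sum>i<n. 2 * (W i * (f (Suc i))^2) + 2 * (W i * (f i)^2))"
    unfolding E_def
  proof (intro sum_mono)
    fix i assume "i \<in> {..<n}"
    then have "W i \<ge> 0" using W_pos by (simp add: less_imp_le)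
    moreover have "(f (Suc i) - f i)^2 \<le> 2 * (f (Suc i))^2 + 2 * (f i)^2"
    proof -
      have "2 * (f (Suc i))^2 + 2 * (f i)^2 - (f (Suc i) - f i)^2 = (f (Suc i) + f i)^2"
        by (simp add: power2_eq_square algebra_simps)
      then show ?thesis by (metis diff_ge_0_iff_ge zero_le_power2)
    qed
    ultimately have "W i * (f (Suc i) - f i)^2 \<le> W i * (2 * (f (Suc i))^2 + 2 * (f i)^2)"
      by (simp add: mult_left_mono)
    then show "W i * (f (Suc i) - f i)^2 \<le> 2 * (W i * (f (Suc i))^2) + 2 * (W i * (f i)^2)"
      by (simp add: algebra_simps)
  qed
  also have "\<dots> = 2 * (\<Sum>i<n. W i * (f (Suc i))^2) + 2 * (\<Sum>i<n. W i * (f i)^2)"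
    by (simp add: sum.distrib sum_distrib_left)
  also have "(\<Sum>i<n. W i * (f (Suc i))^2) \<le> (\<Sum>i\<le>n. pi i * (f i)^2)"
  proof -
    have "(\<Sum>i<n. W i * (f (Suc i))^2) = (\<Sum>i<n. pi (Suc i) * q (Suc i) * (f (Suc i))^2)"
      by (intro sum.cong refl) (simp add: W_def db)
    also have "\<dots> \<le> (\<Sum>i<n. pi (Suc i) * (f (Suc i))^2)"
    proof (intro sum_mono)
      fix i assume "i \<in> {..<n}"
      then have "q (Suc i) \<le> 1" using pq_le1[of "Suc i"] p_nonneg[of "Suc i"] by simp
      then show "pi (Suc i) * q (Suc i) * (f (Suc i))^2 \<le> pi (Suc i) * (f (Suc i))^2"
        using pi_nonneg[of "Suc i"] q_nonneg[of "Suc i"]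
        by (intro mult_right_mono) (auto intro: mult_left_le)
    qed
    also have "\<dots> \<le> pi 0 * (f 0)^2 + (\<Sum>i<n. pi (Suc i) * (f (Suc i))^2)"
      using pi_nonneg[of 0] by simp
    also have "\<dots> = (\<Sum>i\<le>n. pi i * (f i)^2)"
      unfolding lessThan_Suc_atMost[symmetric] sum.lessThan_Suc_shift ..
    finally show ?thesis .
  qed
  also have "(\<Sum>i<n. W i * (f i)^2) \<le> (\<Sum>i\<le>n. pi i * (f i)^2)"
  proof -
    have "(\<Sum>i<n. W i * (f i)^2) \<le> (\<Sum>i<n. pi i * (f i)^2)"
    proof (intro sum_mono)
      fix i assume "i \<in> {..<n}"
      then have "p i \<le> 1" using pq_le1[of i] q_nonneg[of i] by simp
      then show "W i * (f i)^2 \<le> pi i * (f i)^2" unfolding W_def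
        using pi_nonneg[of i] p_nonneg[of i]
        by (intro mult_right_mono) (auto intro: mult_left_le)
    qed
    also have "\<dots> \<le> (\<Sum>i\<le>n. pi i * (f i)^2)"
      using pi_nonneg by (intro sum_mono2) auto
    finally show ?thesis .
  qed
  finally show ?thesis by simp
qed


definition Cc :: real where "Cc = real n * (\<Sum>k<n. 1 / W k)"

lemma crude:
  assumes "(\<Sum>i\<le>n. pi i * g i) = 0"
  shows "(\<Sum>i\<le>n. pi i * (g i)^2) \<le> Cc * E g"
proof -
  define d where "d k = g (Suc k) - g k" for k
  have dsum: "(\<Sum>k<n. (d k)^2) \<le> (\<Sum>k<n. 1 / W k) * E g"
  proof -
    have "(\<Sum>k<n. (d k)^2) \<le> (\<Sum>k<n. E g / W k)"
    proof (intro sum_mono)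
      fix k assume k: "k \<in> {..<n}"
      have Wk: "W k > 0" using k W_pos by simp
      have "W k * (d k)^2 \<le> E g" unfolding E_def d_def
        using k W_pos by (intro member_le_sum[where f="\<lambda>i. W i * (g (Suc i) - g i)^2"]) (auto simp: less_imp_le)
      then show "(d k)^2 \<le> E g / W k" using Wk by (simp add: field_simps)
    qed
    also have "\<dots> = (\<Sum>k<n. 1 / W k) * E g" by (simp add: sum_distrib_right)
    finally show ?thesis .
  qed
  have pt: "(g i - g 0)^2 \<le> real n * (\<Sum>k<n. (d k)^2)" if "i \<le> n" for i
  proof -
    have "g i - g 0 = (\<Sum>k<i. d k)" unfolding d_def by (simp add: sum_lessThan_telescope)
    then have "\<bar>g i - g 0\<bar> \<le> (\<Sum>k<i. \<bar>d k\<bar>)" by (simp add: sum_abs)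
    also have "\<dots> \<le> (\<Sum>k<n. \<bar>d k\<bar>)" using that by (intro sum_mono2) auto
    finally have "(g i - g 0)^2 \<le> (\<Sum>k<n. \<bar>d k\<bar>)^2"
      by (metis abs_ge_zero power2_abs power_mono)
    also have "\<dots> \<le> (\<Sum>k<n. (\<bar>d k\<bar>)^2) * card {..<n}" by (rule sum_squared_le_sum_of_squares)
    finally show ?thesis by (simp add: mult.commute)
  qed
  have "(\<Sum>i\<le>n. pi i * (g i - g 0)^2) = (\<Sum>i\<le>n. pi i * (g i)^2) - 2 * g 0 * (\<Sum>i\<le>n. pi i * g i) + (g 0)^2 * (\<Sum>i\<le>n. pi i)"
    by (simp add: power2_eq_square algebra_simps sum.distrib sum_subtractf sum_distrib_left)
  then have "(\<Sum>i\<le>n. pi i * (g i)^2) \<le> (\<Sum>i\<le>n. pi i * (g i - g 0)^2)"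
    using assms pi_sum by simp
  also have "\<dots> \<le> (\<Sum>i\<le>n. pi i * (real n * (\<Sum>k<n. (d k)^2)))"
    using pt pi_nonneg by (intro sum_mono mult_left_mono) auto
  also have "\<dots> = real n * (\<Sum>k<n. (d k)^2)" using pi_sum by (simp add: sum_distrib_right[symmetric])
  also have "\<dots> \<le> real n * ((\<Sum>k<n. 1 / W k) * E g)" using dsum by (intro mult_left_mono) auto
  finally show ?thesis by (simp add: Cc_def mult.assoc)
qed

lemma Cc_nonneg: "Cc \<ge> 0" unfolding Cc_def using W_pos by (intro mult_nonneg_nonneg sum_nonneg) (auto simp: less_imp_le)


lemma decay:
  fixes u :: "nat \<Rightarrow> nat \<Rightarrow> real"
  assumes step: "\<And>m i. i \<le> n \<Longrightarrow> u (Suc m) i = K (u m) i"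
    and mean: "\<And>m. (\<Sum>i\<le>n. pi i * u m i) = 1"
  shows "(\<Sum>i\<le>n. pi i * (u m i - 1)^2) \<le> 2 * E (u 0) * (bt^2)^m / (1 - bt^2)"
proof -
  define r where "r = bt^2"
  define X where "X m = (\<Sum>i\<le>n. pi i * (u m i - 1)^2)" for m
  define e where "e m = E (u m)" for m
  have r0: "0 \<le> r" "r < 1" using bt_props by (auto simp: r_def power_less_one_iff abs_square_less_1)
  have e_step: "e (Suc m) \<le> r * e m" for m
  proof -
    have "e (Suc m) = E (K (u m))" unfolding e_def by (rule E_cong) (simp add: step)
    also have "\<dots> \<le> r * e m" unfolding r_def e_def by (rule E_contr)
    finally show ?thesis .
  qed
  have e_dec: "e m \<le> r^m * e 0" for m
  proof (induction m)
    case (Suc m)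
    have "e (Suc m) \<le> r * e m" by (rule e_step)
    also have "\<dots> \<le> r * (r^m * e 0)" using Suc r0 by (intro mult_left_mono) auto
    finally show ?case by simp
  qed simp
  have e0: "e 0 \<ge> 0" unfolding e_def by (rule E_nonneg)
  have X_step: "X m - X (Suc m) \<le> 2 * e m" for m
  proof -
    define g where "g i = u m i - 1" for i
    have Kg: "K g i = u (Suc m) i - 1" if "i \<le> n" for i
      unfolding g_def K_shift using step[OF that] by simp
    have "X m - X (Suc m) = (\<Sum>i\<le>n. pi i * (g i)^2) - (\<Sum>i\<le>n. pi i * (K g i)^2)"
      unfolding X_def g_def[symmetric] by (simp add: Kg)
    also have "\<dots> \<le> 2 * E g" by (rule var_step)
    also have "E g = e m" unfolding g_def e_def by (rule E_shift)
    finally show ?thesis .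
  qed
  have X_crude: "X k \<le> Cc * e k" for k
  proof -
    have "(\<Sum>i\<le>n. pi i * (u k i - 1)) = 0"
      using mean[of k] pi_sum by (simp add: algebra_simps sum_subtractf)
    then have "X k \<le> Cc * E (\<lambda>i. u k i - 1)" unfolding X_def by (rule crude)
    then show ?thesis unfolding e_def E_shift .
  qed
  have tel: "X m \<le> X (m + k) + 2 * e 0 * (r^m - r^(m+k)) / (1 - r)" for k
  proof (induction k)
    case (Suc k)
    have "X (m + k) \<le> X (m + Suc k) + 2 * e (m + k)" using X_step[of "m+k"] by simp
    also have "\<dots> \<le> X (m + Suc k) + 2 * (r^(m+k) * e 0)" using e_dec[of "m+k"] by simp
    finally have h: "X (m + k) \<le> X (m + Suc k) + 2 * (r^(m+k) * e 0)" .
    have eq: "2 * e 0 * (r^m - r^(m+k)) / (1 - r) + 2 * (r^(m+k) * e 0) = 2 * e 0 * (r^m - r^(m + Suc k)) / (1 - r)"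
      using r0 by (simp add: field_simps)
    show ?case using Suc h eq by linarith
  qed simp
  have bound: "X m \<le> Cc * e 0 * r^m * r^k + 2 * e 0 * r^m / (1 - r)" for k
  proof -
    have "X (m + k) \<le> Cc * (r^(m+k) * e 0)"
      using X_crude[of "m+k"] e_dec[of "m+k"] Cc_nonneg by (meson mult_left_mono order_trans)
    moreover have "2 * e 0 * (r^m - r^(m+k)) / (1 - r) \<le> 2 * e 0 * r^m / (1 - r)"
      using r0 e0 by (intro divide_right_mono mult_left_mono) auto
    ultimately show ?thesis using tel[of k] by (simp add: power_add mult_ac)
  qed
  have lim: "(\<lambda>k. Cc * e 0 * r^m * r^k + 2 * e 0 * r^m / (1 - r)) \<longlonglongrightarrow> 0 + 2 * e 0 * r^m / (1 - r)"
    using r0 by (intro tendsto_add tendsto_mult_right_zero LIMSEQ_power_zero tendsto_const) auto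
  have "X m \<le> 0 + 2 * e 0 * r^m / (1 - r)"
    by (rule LIMSEQ_le_const[OF lim]) (use bound in auto)
  then show ?thesis by (simp add: X_def e_def r_def)
qed


lemma div2: "(2*n) div 2 = n" by simp
lemma BLp: "BL_p (2*n) i = p i" using npos by (simp add: BL_p_def p_def power2_eq_square field_simps)
lemma BLq: "BL_q (2*n) i = q i" using npos by (simp add: BL_q_def q_def power2_eq_square field_simps)
lemma BLpi: "BL_pi (2*n) i = pi i" by (simp add: BL_pi_def pi_def)

lemma BLT: "i \<le> n \<Longrightarrow> k \<le> n \<Longrightarrow> BL_T (2*n) i k =
   (if i = Suc k then p k else if k = Suc i then q k else if i = k then r k else 0)"
  by (simp add: BL_T_def BLp BLq r_def)

lemma colsum: assumes "k \<le> n" shows "(\<Sum>i\<le>n. BL_T (2*n) i k) = 1"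
proof -
  have pw: "BL_T (2*n) i k = (if i = Suc k then p k else 0) + (if 0 < k then (if i = k - 1 then q k else 0) else 0) + (if i = k then r k else 0)"
    if "i \<le> n" for i
    using that assms by (auto simp: BLT)
  have "(\<Sum>i\<le>n. BL_T (2*n) i k) = (if Suc k \<le> n then p k else 0) + (if 0 < k then q k else 0) + r k"
    using assms by (simp add: pw sum.distrib)
  also have "\<dots> = p k + q k + r k"
  proof -
    have "(if Suc k \<le> n then p k else 0) = p k" proof (cases "Suc k \<le> n")
      case False then have "k = n" using assms by simp
      then show ?thesis using pn by simp
    qed simp
    moreover have "(if 0 < k then q k else 0) = q k" using q0 by (cases k) auto
    ultimately show ?thesis by simp
  qed
  also have "\<dots> = 1" by (simp add: r_def)
  finally show ?thesis .
qed

lemma Ksum: assumes "i \<le> n" shows "(\<Sum>k\<le>n. BL_T (2*n) k i * f k) = K f i"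
proof -
  have pw: "BL_T (2*n) k i * f k = (if k = Suc i then p i * f (Suc i) else 0) + (if 0 < i then (if k = i - 1 then q i * f (i - 1) else 0) else 0) + (if k = i then r i * f i else 0)"
    if "k \<le> n" for k
    using that assms by (auto simp: BLT)
  have "(\<Sum>k\<le>n. BL_T (2*n) k i * f k) = (if Suc i \<le> n then p i * f (Suc i) else 0) + (if 0 < i then q i * f (i - 1) else 0) + r i * f i"
    using assms by (simp add: pw sum.distrib)
  also have "\<dots> = K f i"
  proof -
    have "(if Suc i \<le> n then p i * f (Suc i) else 0) = p i * f (Suc i)" proof (cases "Suc i \<le> n")
      case False then have "i = n" using assms by simp
      then show ?thesis using pn by simp
    qed simp
    moreover have "(if 0 < i then q i * f (i - 1) else 0) = q i * f (i - 1)" using q0 by (cases i) auto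
    ultimately show ?thesis by (simp add: K_def)
  qed
  finally show ?thesis .
qed

lemma rev: assumes "i \<le> n" "k \<le> n" shows "BL_T (2*n) i k * pi k = BL_T (2*n) k i * pi i"
proof -
  consider "i = Suc k" | "k = Suc i" | "i \<noteq> Suc k" "k \<noteq> Suc i" by blast
  then show ?thesis
  proof cases
    case 1 then show ?thesis using assms db[of k] unfolding BLT[OF assms] BLT[OF assms(2,1)] by (simp add: mult.commute)
  next
    case 2 then show ?thesis using assms db[of i] unfolding BLT[OF assms] BLT[OF assms(2,1)] by (simp add: mult.commute)
  next
    case 3 then show ?thesis using assms unfolding BLT[OF assms] BLT[OF assms(2,1)] by auto
  qed
qed

lemma rho_sum: assumes "j \<le> n" shows "(\<Sum>i\<le>n. BL_rho (2*n) m j i) = 1"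
proof (induction m)
  case 0 then show ?case using assms by simp
next
  case (Suc m)
  have "(\<Sum>i\<le>n. BL_rho (2*n) (Suc m) j i) = (\<Sum>i\<le>n. \<Sum>k\<le>n. BL_T (2*n) i k * BL_rho (2*n) m j k)"
    by (simp add: atLeast0AtMost)
  also have "\<dots> = (\<Sum>k\<le>n. \<Sum>i\<le>n. BL_T (2*n) i k * BL_rho (2*n) m j k)" by (rule sum.swap)
  also have "\<dots> = (\<Sum>k\<le>n. BL_rho (2*n) m j k)"
    by (intro sum.cong refl) (simp add: sum_distrib_right[symmetric] colsum)
  finally show ?case using Suc by simp
qed

lemma rho_step: assumes "i \<le> n"
  shows "BL_rho (2*n) (Suc m) j i / pi i = K (\<lambda>k. BL_rho (2*n) m j k / pi k) i"
proof -
  have "BL_rho (2*n) (Suc m) j i / pi i = (\<Sum>k\<le>n. BL_T (2*n) i k * BL_rho (2*n) m j k / pi i)"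
    by (simp add: atLeast0AtMost sum_divide_distrib)
  also have "\<dots> = (\<Sum>k\<le>n. BL_T (2*n) k i * (BL_rho (2*n) m j k / pi k))"
  proof (intro sum.cong refl)
    fix k assume "k \<in> {..n}"
    then have k: "k \<le> n" by simp
    have "BL_T (2*n) i k = BL_T (2*n) k i * pi i / pi k"
      using rev[OF assms k] pi_pos[OF k] by (simp add: field_simps)
    then show "BL_T (2*n) i k * BL_rho (2*n) m j k / pi i = BL_T (2*n) k i * (BL_rho (2*n) m j k / pi k)"
      using pi_pos[OF assms] pi_pos[OF k] by (simp add: field_simps)
  qed
  also have "\<dots> = K (\<lambda>k. BL_rho (2*n) m j k / pi k) i" by (rule Ksum[OF assms])
  finally show ?thesis .
qed


lemma u0_norm: assumes "j \<le> n"
  shows "(\<Sum>i\<le>n. pi i * (BL_rho (2*n) 0 j i / pi i)^2) = 1 / pi j"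
proof -
  have "(\<Sum>i\<le>n. pi i * (BL_rho (2*n) 0 j i / pi i)^2) = (\<Sum>i\<le>n. if i = j then 1 / pi j else 0)"
    using pi_pos[OF assms] by (intro sum.cong refl) (simp add: power2_eq_square)
  also have "\<dots> = 1 / pi j" using assms by simp
  finally show ?thesis .
qed

lemma perj: assumes j: "j \<le> n"
  shows "BL_tv (2*n) (BL_rho (2*n) m j) \<le> (1/2) * sqrt (8 / pi j * (bt^2)^m / (1 - bt^2))"
proof -
  define u where "u m i = BL_rho (2*n) m j i / pi i" for m i
  have r1: "1 - bt^2 > 0" using bt_props by (simp add: abs_square_less_1)
  have step: "u (Suc m) i = K (u m) i" if "i \<le> n" for m i
    unfolding u_def by (rule rho_step[OF that])
  have mean: "(\<Sum>i\<le>n. pi i * u m i) = 1" for m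
  proof -
    have "(\<Sum>i\<le>n. pi i * u m i) = (\<Sum>i\<le>n. BL_rho (2*n) m j i)"
      unfolding u_def by (intro sum.cong refl) (simp add: pi_pos less_imp_neq[symmetric])
    then show ?thesis using rho_sum[OF j] by simp
  qed
  have X: "(\<Sum>i\<le>n. pi i * (u m i - 1)^2) \<le> 2 * E (u 0) * (bt^2)^m / (1 - bt^2)"
    by (rule decay[where u=u, OF step mean])
  have Eu0: "E (u 0) \<le> 4 / pi j"
    using E_le_norm[of "u 0"] u0_norm[OF j] unfolding u_def by simp
  have "2 * E (u 0) * (bt^2)^m / (1 - bt^2) \<le> 2 * (4 / pi j) * (bt^2)^m / (1 - bt^2)"
    using Eu0 r1 by (intro divide_right_mono mult_right_mono mult_left_mono) auto
  with X have X2: "(\<Sum>i\<le>n. pi i * (u m i - 1)^2) \<le> 8 / pi j * (bt^2)^m / (1 - bt^2)" by simp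
  have "BL_tv (2*n) (BL_rho (2*n) m j) = (1/2) * (\<Sum>i\<le>n. pi i * \<bar>u m i - 1\<bar>)"
  proof -
    have "(\<Sum>i\<in>{0..n}. \<bar>BL_rho (2*n) m j i - BL_pi (2*n) i\<bar>) = (\<Sum>i\<le>n. pi i * \<bar>u m i - 1\<bar>)"
      unfolding atLeast0AtMost
    proof (intro sum.cong refl)
      fix i assume "i \<in> {..n}"
      then have pp: "pi i > 0" using pi_pos by simp
      have "BL_rho (2*n) m j i - pi i = pi i * (u m i - 1)" using pp by (simp add: u_def field_simps)
      then show "\<bar>BL_rho (2*n) m j i - BL_pi (2*n) i\<bar> = pi i * \<bar>u m i - 1\<bar>"
        using pp by (simp add: BLpi abs_mult)
    qed
    then show ?thesis by (simp add: BL_tv_def)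
  qed
  also have "\<dots> \<le> (1/2) * sqrt (\<Sum>i\<le>n. pi i * (u m i - 1)^2)"
    using jensen_abs[where A="{..n}" and w=pi and h="\<lambda>i. u m i - 1"] pi_nonneg pi_sum by simp
  also have "\<dots> \<le> (1/2) * sqrt (8 / pi j * (bt^2)^m / (1 - bt^2))"
    using X2 by simp
  finally show ?thesis .
qed

lemma avg_bound:
  "(\<Sum>j\<le>n. pi j * BL_tv (2*n) (BL_rho (2*n) m j)) \<le> (1/2) * sqrt (8 * (real n + 1) * (bt^2)^m / (1 - bt^2))"
proof -
  define Y where "Y j = 8 / pi j * (bt^2)^m / (1 - bt^2)" for j
  have r1: "1 - bt^2 > 0" using bt_props by (simp add: abs_square_less_1)
  have Y0: "Y j \<ge> 0" for j using r1 pi_nonneg[of j] by (simp add: Y_def)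
  have "(\<Sum>j\<le>n. pi j * BL_tv (2*n) (BL_rho (2*n) m j)) \<le> (\<Sum>j\<le>n. pi j * ((1/2) * sqrt (Y j)))"
    using perj pi_nonneg unfolding Y_def by (intro sum_mono mult_left_mono) auto
  also have "\<dots> = (1/2) * (\<Sum>j\<le>n. pi j * \<bar>sqrt (Y j)\<bar>)"
    unfolding sum_distrib_left by (intro sum.cong refl) (simp add: Y0)
  also have "\<dots> \<le> (1/2) * sqrt (\<Sum>j\<le>n. pi j * (sqrt (Y j))^2)"
    using jensen_abs[where A="{..n}" and w=pi and h="\<lambda>j. sqrt (Y j)"] pi_nonneg pi_sum by simp
  also have "(\<Sum>j\<le>n. pi j * (sqrt (Y j))^2) = (\<Sum>j\<le>n. 8 * (bt^2)^m / (1 - bt^2))"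
    using Y0 pi_pos by (intro sum.cong refl) (simp add: Y_def less_imp_neq[symmetric])
  also have "\<dots> = 8 * (real n + 1) * (bt^2)^m / (1 - bt^2)" by simp
  finally show ?thesis .
qed


lemma numeric:
  assumes hm: "real m \<ge> (1/4) * real (2*n) * ln (real (2*n)) + (c/2 - ln 2 / 8) * real (2*n)"
  shows "(1/2) * sqrt (8 * (real n + 1) * (bt^2)^m / (1 - bt^2)) \<le> exp (-2*c)"
proof -
  have nz: "real n > 0" by (rule npos)
  have b: "0 \<le> bt" "bt < 1" by (rule bt_props)+
  have r1: "1 - bt^2 \<ge> 2 / real n"
  proof -
    have "bt^2 \<le> bt" using b by (simp add: power2_eq_square mult_left_le)
    then show ?thesis by (simp add: bt_def)
  qed
  have r1p: "2 / real n > 0" using nz by simp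
  have bexp: "bt \<le> exp (-2 / real n)" using exp_ge_add_one_self[of "-2 / real n"] by (simp add: bt_def)
  have "(bt^2)^m \<le> (exp (-2 / real n)^2)^m"
    using bexp b by (intro power_mono) (auto simp: power_mono)
  also have "\<dots> = exp (-4 / real n) ^ m"
    by (simp add: power2_eq_square exp_add[symmetric])
  also have "\<dots> = exp (real m * (-4 / real n))"
    by (rule exp_of_nat_mult[symmetric])
  finally have bm: "(bt^2)^m \<le> exp (- (4 * real m / real n))" by (simp add: mult.commute)
  have m4: "4 * real m / real n \<ge> 2 * ln (2 * real n) + 4 * c - ln 2"
  proof -
    have "real m \<ge> real n / 2 * ln (2 * real n) + c * real n - ln 2 / 4 * real n"
      using hm by (simp add: algebra_simps)
    then have "4 * real m \<ge> real n * (2 * ln (2 * real n) + 4 * c - ln 2)"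
      by (simp add: algebra_simps)
    then show ?thesis using nz by (simp add: field_simps)
  qed
  have "exp (- (4 * real m / real n)) \<le> exp (ln 2 - 2 * ln (2 * real n) - 4 * c)"
    using m4 by simp
  also have "\<dots> = 2 * exp (-4*c) / (2 * real n)^2"
  proof -
    have l: "exp (2 * ln (2 * real n)) = (2 * real n)^2"
      using nz by (simp only: mult_2 exp_add power2_eq_square) simp
    have "exp (ln 2 - 2 * ln (2 * real n) - 4 * c) = exp (ln 2) / exp (2 * ln (2 * real n)) / exp (4 * c)"
      by (simp only: exp_diff)
    also have "\<dots> = 2 / (2 * real n)^2 / exp (4 * c)" by (simp only: l) simp
    also have "\<dots> = 2 * exp (-4*c) / (2 * real n)^2" by (simp add: exp_minus field_simps)
    finally show ?thesis .
  qed
  finally have e: "(bt^2)^m \<le> 2 * exp (-4*c) / (2 * real n)^2" using bm by simp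
  have "8 * (real n + 1) * (bt^2)^m / (1 - bt^2) \<le> 8 * (real n + 1) * (bt^2)^m / (2 / real n)"
  proof (rule divide_left_mono)
    show "2 / real n \<le> 1 - bt^2" by (rule r1)
    show "0 \<le> 8 * (real n + 1) * (bt^2)^m" by simp
    have "1 - bt^2 > 0" using r1 r1p by linarith
    then show "0 < (1 - bt^2) * (2 / real n)" using r1p by (rule mult_pos_pos)
  qed
  also have "\<dots> = 4 * real n * (real n + 1) * (bt^2)^m" using nz by (simp add: field_simps)
  also have "\<dots> \<le> 4 * real n * (real n + 1) * (2 * exp (-4*c) / (2 * real n)^2)"
    using e nz by (intro mult_left_mono) auto
  also have "\<dots> = 2 * ((real n + 1) / real n) * exp (-4*c)"
    using nz by (simp add: field_simps power2_eq_square)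
  also have "\<dots> \<le> 2 * 2 * exp (-4*c)"
  proof -
    have "(real n + 1) / real n \<le> 2" using nz n3r by (simp add: field_simps)
    then show ?thesis by (intro mult_right_mono mult_left_mono) auto
  qed
  finally have h: "8 * (real n + 1) * (bt^2)^m / (1 - bt^2) \<le> (2 * exp (-2*c))^2"
    by (simp add: power2_eq_square exp_add[symmetric])
  have "sqrt (8 * (real n + 1) * (bt^2)^m / (1 - bt^2)) \<le> 2 * exp (-2*c)"
    using h by (simp add: real_sqrt_le_iff real_le_lsqrt)
  then show ?thesis by simp
qed

end

theorem theorem5p1:
  "\<exists>A::real. A > 0 \<and>
     (\<forall>(N::nat) (c::real) (m::nat).
        even N \<longrightarrow> N \<ge> 6 \<longrightarrow> c > 0 \<longrightarrow>
        real m \<ge> (1/4) * real N * ln (real N) + (c/2 - ln 2 / 8) * real N \<longrightarrow>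
        (\<Sum>j\<in>{0..N div 2}. BL_pi N j * BL_tv N (BL_rho N m j)) \<le> A * exp (-2*c))"
proof (intro exI[of _ 1] conjI allI impI)
  fix N :: nat and c :: real and m :: nat
  assume ev: "even N" and N6: "N \<ge> 6" and c: "c > 0"
    and hm: "real m \<ge> (1/4) * real N * ln (real N) + (c/2 - ln 2 / 8) * real N"
  define n where "n = N div 2"
  have Nn: "N = 2 * n" using ev by (simp add: n_def)
  have n3: "3 \<le> n" using N6 by (simp add: n_def)
  interpret BLc n using n3 by unfold_locales
  have "(\<Sum>j\<in>{0..N div 2}. BL_pi N j * BL_tv N (BL_rho N m j))
        = (\<Sum>j\<le>n. pi j * BL_tv (2*n) (BL_rho (2*n) m j))"
    unfolding Nn by (simp add: atLeast0AtMost BLpi)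
  also have "\<dots> \<le> (1/2) * sqrt (8 * (real n + 1) * (bt^2)^m / (1 - bt^2))" by (rule avg_bound)
  also have "\<dots> \<le> exp (-2*c)" by (rule numeric) (use hm Nn in simp)
  finally show "(\<Sum>j\<in>{0..N div 2}. BL_pi N j * BL_tv N (BL_rho N m j)) \<le> 1 * exp (-2*c)" by simp
qed (simp)

end
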